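(* The function $H:\mathbb{R}\to\mathbb{R}$, $H(x)=\psi'(x)\big(c-\tilde{R}(x,\bar{y})\big)+(\rho+\kappa)^{-1}\psi(x)$, has exactly one zero $\tilde{x}\in\mathbb{R}$.
   Context: Fix constants $\mu\in\mathbb{R}$, $\kappa>0$, $\sigma>0$, $\rho>0$, $\beta>0$, $c\geq0$, $\bar{y}>0$. Let $D_\alpha(x)=\frac{e^{-x^2/4}}{\Gamma(-\alpha)}\int_0^\infty t^{-\alpha-1}e^{-t^2/2-xt}dt$ ($\alpha<0$) be the parabolic cylinder function, and $\psi(x)=e^{\frac{\kappa(x-\mu)^2}{2\sigma^2}}D_{-\rho/\kappa}\big(-\frac{x-\mu}{\sigma}\sqrt{2\kappa}\big)$; $\psi$ is the strictly increasing positive solution of $\frac{\sigma^2}{2}u''+\kappa(\mu-x)u'-\rho u=0$. Let $\tilde{R}(x,y)=\frac{\mu\kappa+\rho x-\beta(\rho+2\kappa)y}{\rho(\rho+\kappa)}$. *)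

theory Defs
  imports "HOL-Analysis.Analysis"
begin

text \<open>Parabolic cylinder function, integral representation for alpha < 0.\<close>
definition parabolic_cylinder_D :: "real \<Rightarrow> real \<Rightarrow> real" where
  "parabolic_cylinder_D \<alpha> x =
     exp (- (x\<^sup>2) / 4) / Gamma (- \<alpha>) *
     (LBINT t:{0<..}. t powr (- \<alpha> - 1) * exp (- (t\<^sup>2) / 2 - x * t))"

definition psi_fun :: "real \<Rightarrow> real \<Rightarrow> real \<Rightarrow> real \<Rightarrow> real \<Rightarrow> real" where
  "psi_fun \<mu> \<kappa> \<sigma> \<rho> x =
     exp (\<kappa> * (x - \<mu>)\<^sup>2 / (2 * \<sigma>\<^sup>2)) *
     parabolic_cylinder_D (- \<rho> / \<kappa>) (- ((x - \<mu>) / \<sigma>) * sqrt (2 * \<kappa>))"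

definition R_tilde :: "real \<Rightarrow> real \<Rightarrow> real \<Rightarrow> real \<Rightarrow> real \<Rightarrow> real \<Rightarrow> real" where
  "R_tilde \<mu> \<kappa> \<rho> \<beta> x y =
     (\<mu> * \<kappa> + \<rho> * x - \<beta> * (\<rho> + 2 * \<kappa>) * y) / (\<rho> * (\<rho> + \<kappa>))"

definition H_fun :: "real \<Rightarrow> real \<Rightarrow> real \<Rightarrow> real \<Rightarrow> real \<Rightarrow> real \<Rightarrow> real \<Rightarrow> real \<Rightarrow> real" where
  "H_fun \<mu> \<kappa> \<sigma> \<rho> \<beta> c ybar x =
     deriv (psi_fun \<mu> \<kappa> \<sigma> \<rho>) x * (c - R_tilde \<mu> \<kappa> \<rho> \<beta> x ybar)
     + psi_fun \<mu> \<kappa> \<sigma> \<rho> x / (\<rho> + \<kappa>)"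

end

theory Submission
  imports Defs
begin


lemma abstract_unique:
  fixes F0 F1 F2 F3 :: "real \<Rightarrow> real" and s0 :: real
  assumes d0: "\<And>s. (F0 has_real_derivative F1 s) (at s)"
    and d1: "\<And>s. (F1 has_real_derivative F2 s) (at s)"
    and d2: "\<And>s. (F2 has_real_derivative F3 s) (at s)"
    and p0: "\<And>s. F0 s > 0" and p1: "\<And>s. F1 s > 0"
    and p2: "\<And>s. F2 s > 0" and p3: "\<And>s. F3 s > 0"
  shows "\<exists>!s. F0 s + (s0 - s) * F1 s = 0"
proof -
  define G where "G s = F0 s + (s0 - s) * F1 s" for s
  have dG: "(G has_real_derivative (s0 - s) * F2 s) (at s)" for s
  proof -
    have l: "((\<lambda>z. s0 - z) has_real_derivative -1) (at s)"
      by (auto intro!: derivative_eq_intros)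
    have "(G has_real_derivative F1 s + ((-1) * F1 s + F2 s * (s0 - s))) (at s)"
      unfolding G_def by (intro DERIV_add d0 DERIV_mult l d1)
    then show ?thesis by (simp add: algebra_simps)
  qed
  have contG: "continuous_on S G" for S
    using dG by (meson DERIV_isCont continuous_at_imp_continuous_on)
  have pos: "G s > 0" if "s \<le> s0" for s
    using p0[of s] p1[of s] that unfolding G_def
    by (smt (verit) mult_nonneg_nonneg)
  have decr: "G b < G a" if "s0 \<le> a" "a < b" for a b
  proof (rule DERIV_neg_imp_decreasing_open[OF that(2)])
    fix x assume "a < x" "x < b"
    then show "\<exists>y. DERIV G x :> y \<and> y < 0"
      using dG[of x] p2[of x] that by (intro exI[of _ "(s0 - x) * F2 x"]) (auto simp: mult_neg_pos)
  qed (rule contG)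
  have F2mono: "F2 a \<le> F2 b" if "a \<le> b" for a b
  proof (cases "a < b")
    case True
    then show ?thesis using DERIV_pos_imp_increasing[OF True, of F2] d2 p3 by (meson less_imp_le)
  qed (use that in auto)
  define s1 where "s1 = s0 + 1"
  define b where "b = s1 + (\<bar>G s1\<bar> + 1) / F2 s1"
  have "s1 < b" unfolding b_def using p2[of s1] by (simp add: add_pos_nonneg)
  then obtain z where z: "s1 < z" "z < b" "G b - G s1 = (b - s1) * ((s0 - z) * F2 z)"
    using MVT2[of s1 b G "\<lambda>s. (s0 - s) * F2 s"] dG by blast
  have "(s0 - z) * F2 z \<le> - F2 s1"
  proof -
    have "(s0 - z) * F2 z \<le> (-1) * F2 z" using z p2[of z] unfolding s1_def
      by (intro mult_right_mono) auto
    also have "\<dots> \<le> - F2 s1" using F2mono[of s1 z] z by simp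
    finally show ?thesis .
  qed
  then have "G b - G s1 \<le> (b - s1) * (- F2 s1)"
    using z(3) \<open>s1 < b\<close> by (metis diff_gt_0_iff_gt less_eq_real_def mult_left_mono)
  also have "\<dots> = - (\<bar>G s1\<bar> + 1)" unfolding b_def using p2[of s1] by simp
  finally have Gb: "G b < 0" by simp
  have "s0 \<le> b" using \<open>s1 < b\<close> unfolding s1_def by simp
  obtain x where x: "s0 \<le> x" "x \<le> b" "G x = 0"
    using IVT2'[of G b 0 s0, OF _ _ \<open>s0 \<le> b\<close> contG] Gb pos[of s0] by auto
  show ?thesis unfolding G_def[symmetric]
  proof (rule ex1I[of _ x])
    fix y assume y: "G y = 0"
    show "y = x"
    proof (rule ccontr)
      assume "y \<noteq> x"
      have "s0 < y" using pos[of y] y by (cases "y \<le> s0") auto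
      have "s0 < x" using pos[of x] x by (cases "x \<le> s0") auto
      show False using decr[of x y] decr[of y x] \<open>y \<noteq> x\<close> \<open>s0 < y\<close> \<open>s0 < x\<close> x y
        by (metis less_eq_real_def linorder_neqE_linordered_idom order_less_irrefl)
    qed
  qed (rule x(3))
qed



lemma gamma_int:
  fixes p :: real assumes "p > 0"
  shows "set_integrable lborel {0<..} (\<lambda>t::real. t powr (p-1) / exp t)"
proof -
  have "(\<lambda>t. complex_of_real t powr (complex_of_real p - 1) / of_real (exp t)) absolutely_integrable_on {0<..}"
    using absolutely_integrable_Gamma_integral'[of "complex_of_real p"] assms by simp
  then have "integrable lebesgue (\<lambda>t. Re (indicat_real {0<..} t *\<^sub>R (complex_of_real t powr (complex_of_real p - 1) / of_real (exp t))))"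
    unfolding absolutely_integrable_on_def set_integrable_def by (rule integrable_Re)
  also have "(\<lambda>t. Re (indicat_real {0<..} t *\<^sub>R (complex_of_real t powr (complex_of_real p - 1) / of_real (exp t))))
     = (\<lambda>t. indicat_real {0<..} t *\<^sub>R (t powr (p-1) / exp t))"
  proof (rule ext)
    fix t :: real
    show "Re (indicat_real {0<..} t *\<^sub>R (complex_of_real t powr (complex_of_real p - 1) / of_real (exp t))) = indicat_real {0<..} t *\<^sub>R (t powr (p-1) / exp t)"
    proof (cases "t > 0")
      case True
      then have "complex_of_real t powr (complex_of_real p - 1) = of_real (t powr (p - 1))"
        using powr_of_real[of t "p-1"] by simp
      then show ?thesis using True by (simp flip: of_real_divide)
    qed (simp add: indicator_def)
  qed
  finally have "integrable lebesgue (\<lambda>t. indicat_real {0<..} t *\<^sub>R (t powr (p-1) / exp t))" .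
  then show ?thesis
    unfolding set_integrable_def
    by (subst (asm) integrable_completion)
       (auto intro!: borel_measurable_continuous_on_indicator continuous_intros)
qed

lemma int_F:
  fixes p s :: real assumes "p > 0"
  shows "set_integrable lborel {0<..} (\<lambda>t::real. t powr (p-1) * exp (-(t\<^sup>2)/2 + s*t))"
  unfolding set_integrable_def
proof (rule Bochner_Integration.integrable_bound)
  show "integrable lborel (\<lambda>t. exp ((s+1)\<^sup>2/2) * (indicat_real {0<..} t *\<^sub>R (t powr (p-1) / exp t)))"
    using gamma_int[OF assms] unfolding set_integrable_def
    by (rule integrable_mult_right)
  show "(\<lambda>t. indicat_real {0<..} t *\<^sub>R (t powr (p-1) * exp (-(t\<^sup>2)/2 + s*t))) \<in> borel_measurable lborel"
    by (auto intro!: borel_measurable_continuous_on_indicator continuous_intros)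
  show "AE t in lborel. norm (indicat_real {0<..} t *\<^sub>R (t powr (p-1) * exp (-(t\<^sup>2)/2 + s*t)))
     \<le> norm (exp ((s+1)\<^sup>2/2) * (indicat_real {0<..} t *\<^sub>R (t powr (p-1) / exp t)))"
  proof (rule AE_I2)
    fix t :: real
    have "exp (-(t\<^sup>2)/2 + s*t) \<le> exp ((s+1)\<^sup>2/2) / exp t"
    proof -
      have "-(t\<^sup>2)/2 + s*t \<le> (s+1)\<^sup>2/2 - t"
        using zero_le_power2[of "t - (s+1)"] by (simp add: power2_eq_square algebra_simps)
      then show ?thesis by (simp add: exp_diff[symmetric])
    qed
    then have "t powr (p-1) * exp (-(t\<^sup>2)/2 + s*t) \<le> t powr (p-1) * (exp ((s+1)\<^sup>2/2) / exp t)"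
      by (intro mult_left_mono) auto
    then show "norm (indicat_real {0<..} t *\<^sub>R (t powr (p-1) * exp (-(t\<^sup>2)/2 + s*t)))
     \<le> norm (exp ((s+1)\<^sup>2/2) * (indicat_real {0<..} t *\<^sub>R (t powr (p-1) / exp t)))"
      by (auto simp: indicator_def abs_mult mult_ac)
  qed
qed



definition FF :: "real \<Rightarrow> real \<Rightarrow> real" where
  "FF p s = (LBINT t:{0<..}. t powr (p-1) * exp (-(t\<^sup>2)/2 + s*t))"

lemma exp_m1_bound:
  fixes x :: real shows "\<bar>exp x - 1\<bar> \<le> \<bar>x\<bar> * exp \<bar>x\<bar>"
proof (cases "x \<ge> 0")
  case True
  have "1 - x \<le> exp (-x)" using exp_ge_add_one_self[of "-x"] by simp
  then have "(1 - x) * exp x \<le> exp (-x) * exp x" by (intro mult_right_mono) auto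
  then have "exp x - x * exp x \<le> 1" by (simp add: algebra_simps flip: exp_add)
  moreover have "exp x \<ge> 1" using True by simp
  ultimately show ?thesis using True by simp
next
  case False
  have a: "1 - exp x \<le> -x" using exp_ge_add_one_self[of x] by linarith
  have "1 \<le> exp (-x)" using False by simp
  then have b: "-x * 1 \<le> -x * exp (-x)" using False by (intro mult_left_mono) auto
  have "exp x \<le> 1" using False by simp
  then have c: "\<bar>exp x - 1\<bar> = 1 - exp x" by simp
  have d: "\<bar>x\<bar> = -x" using False by simp
  show ?thesis unfolding c d using a b by linarith
qed

lemma quot_bound:
  fixes h t B :: real assumes "t \<ge> 0" "\<bar>h\<bar> \<le> B" "h \<noteq> 0"
  shows "\<bar>(exp (h*t) - 1) / h\<bar> \<le> t * exp (B*t)"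
proof -
  have "\<bar>exp (h*t) - 1\<bar> \<le> \<bar>h*t\<bar> * exp \<bar>h*t\<bar>" by (rule exp_m1_bound)
  also have "\<dots> \<le> \<bar>h\<bar> * t * exp (B*t)"
    using assms by (auto simp: abs_mult intro!: mult_left_mono mult_right_mono)
  finally show ?thesis using assms by (simp add: divide_le_eq abs_divide mult_ac)
qed

lemma powr_pm1: "t > 0 \<Longrightarrow> t powr (p-1) * t = t powr (p::real)"
  using powr_add[of t "p-1" 1] by simp

lemma FF_deriv:
  fixes p s :: real assumes p: "p > 0"
  shows "(FF p has_real_derivative FF (p+1) s) (at s)"
  unfolding DERIV_def tendsto_at_iff_sequentially comp_def
proof (intro allI impI)
  fix X :: "nat \<Rightarrow> real"
  assume X0: "\<forall>i. X i \<in> UNIV - {0}" and X: "X \<longlonglongrightarrow> 0"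
  obtain B where B: "B > 0" "\<And>n. \<bar>X n\<bar> \<le> B"
    using BseqE[OF convergent_imp_Bseq[OF convergentI[OF X]]] by auto
  define g where "g s t = t powr (p-1) * exp (-(t\<^sup>2)/2 + s*t)" for s t :: real
  have gint: "set_integrable lborel {0<..} (g s)" for s unfolding g_def by (rule int_F[OF p])
  have gsplit: "g (s+h) t = g s t * exp (h*t)" for h t
    unfolding g_def by (simp add: algebra_simps flip: exp_add)
  have quot: "(FF p (s + h) - FF p s) / h = (LBINT t:{0<..}. (g (s+h) t - g s t) / h)" for h
    unfolding FF_def g_def[symmetric] set_integral_divide_zero
    using set_integral_diff(2)[OF gint gint] by simp
  define w where "w t = indicat_real {0<..} t *\<^sub>R (t powr (p+1-1) * exp (-(t\<^sup>2)/2 + (s+B)*t))" for t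
  have wint: "integrable lborel w"
    using int_F[of "p+1" "s+B"] p unfolding w_def set_integrable_def by simp
  have "(\<lambda>i. integral\<^sup>L lborel (\<lambda>t. indicat_real {0<..} t *\<^sub>R ((g (s + X i) t - g s t) / X i)))
        \<longlonglongrightarrow> integral\<^sup>L lborel (\<lambda>t. indicat_real {0<..} t *\<^sub>R (t powr (p+1-1) * exp (-(t\<^sup>2)/2 + s*t)))"
  proof (rule integral_dominated_convergence[OF _ _ wint])
    show "(\<lambda>t. indicat_real {0<..} t *\<^sub>R (t powr (p+1-1) * exp (-(t\<^sup>2)/2 + s*t))) \<in> borel_measurable lborel"
      by (auto intro!: borel_measurable_continuous_on_indicator continuous_intros)
    show "(\<lambda>t. indicat_real {0<..} t *\<^sub>R ((g (s + X i) t - g s t) / X i)) \<in> borel_measurable lborel" for i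
      unfolding g_def by (auto intro!: borel_measurable_continuous_on_indicator continuous_intros)
    show "AE t in lborel. norm (indicat_real {0<..} t *\<^sub>R ((g (s + X i) t - g s t) / X i)) \<le> w t" for i
    proof (rule AE_I2)
      fix t :: real
      show "norm (indicat_real {0<..} t *\<^sub>R ((g (s + X i) t - g s t) / X i)) \<le> w t"
      proof (cases "t > 0")
        case True
        have "\<bar>(g (s + X i) t - g s t) / X i\<bar> = g s t * \<bar>(exp (X i * t) - 1) / X i\<bar>"
        proof -
          have "(g (s + X i) t - g s t) / X i = g s t * ((exp (X i * t) - 1) / X i)"
            unfolding gsplit by (simp add: algebra_simps)
          moreover have "g s t \<ge> 0" unfolding g_def by simp
          ultimately show ?thesis by (metis abs_mult abs_of_nonneg)
        qed
        also have "\<dots> \<le> g s t * (t * exp (B*t))"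
          using quot_bound[of t "X i" B] True B X0 unfolding g_def by (intro mult_left_mono) auto
        also have "\<dots> = t powr (p+1-1) * exp (-(t\<^sup>2)/2 + (s+B)*t)"
        proof -
          have "g s t * (t * exp (B*t)) = (t powr (p-1) * t) * (exp (-(t\<^sup>2)/2 + s*t) * exp (B*t))"
            unfolding g_def by (simp add: mult_ac)
          also have "\<dots> = t powr (p+1-1) * exp (-(t\<^sup>2)/2 + (s+B)*t)"
            unfolding powr_pm1[OF True] by (simp add: algebra_simps flip: exp_add)
          finally show ?thesis .
        qed
        finally show ?thesis using True unfolding w_def by simp
      qed (simp add: w_def)
    qed
    show "AE t in lborel. (\<lambda>i. indicat_real {0<..} t *\<^sub>R ((g (s + X i) t - g s t) / X i))
            \<longlonglongrightarrow> indicat_real {0<..} t *\<^sub>R (t powr (p+1-1) * exp (-(t\<^sup>2)/2 + s*t))"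
    proof (rule AE_I2)
      fix t :: real
      show "(\<lambda>i. indicat_real {0<..} t *\<^sub>R ((g (s + X i) t - g s t) / X i))
            \<longlonglongrightarrow> indicat_real {0<..} t *\<^sub>R (t powr (p+1-1) * exp (-(t\<^sup>2)/2 + s*t))"
      proof (cases "t > 0")
        case True
        have "((\<lambda>h. exp (h*t)) has_real_derivative exp (0*t) * t) (at 0)"
          by (auto intro!: derivative_eq_intros)
        then have "((\<lambda>h. (exp ((0+h)*t) - exp (0*t)) / h) \<longlongrightarrow> t) (at 0)"
          unfolding DERIV_def by simp
        then have lim: "(\<lambda>i. (exp (X i * t) - 1) / X i) \<longlonglongrightarrow> t"
          unfolding tendsto_at_iff_sequentially comp_def using X0 X by auto
        have L: "(\<lambda>i. g s t * ((exp (X i * t) - 1) / X i)) \<longlonglongrightarrow> g s t * t"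
          by (intro tendsto_intros lim)
        have R: "g s t * t = t powr (p+1-1) * exp (-(t\<^sup>2)/2 + s*t)"
        proof -
          have "g s t * t = (t powr (p-1) * t) * exp (-(t\<^sup>2)/2 + s*t)"
            unfolding g_def by (simp add: mult_ac)
          then show ?thesis unfolding powr_pm1[OF True] by simp
        qed
        have "(g (s + X i) t - g s t) / X i = g s t * ((exp (X i * t) - 1) / X i)" for i
          unfolding gsplit by (simp add: algebra_simps)
        then have E: "(\<lambda>i. indicat_real {0<..} t *\<^sub>R ((g (s + X i) t - g s t) / X i)) = (\<lambda>i. g s t * ((exp (X i * t) - 1) / X i))"
          using True by auto
        have E2: "indicat_real {0<..} t *\<^sub>R (t powr (p+1-1) * exp (-(t\<^sup>2)/2 + s*t)) = g s t * t"
          using True R by simp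
        show ?thesis unfolding E E2 by (rule L)
      qed simp
    qed
  qed
  then show "(\<lambda>i. (FF p (s + X i) - FF p s) / X i) \<longlonglongrightarrow> FF (p + 1) s"
    unfolding quot unfolding FF_def set_lebesgue_integral_def by simp
qed



lemma FF_pos:
  fixes p s :: real assumes p: "p > 0"
  shows "FF p s > 0"
proof -
  let ?f = "\<lambda>t::real. indicat_real {0<..} t *\<^sub>R (t powr (p-1) * exp (-(t\<^sup>2)/2 + s*t))"
  have I: "integrable lborel ?f" using int_F[OF p, of s] unfolding set_integrable_def .
  have N: "AE t in lborel. 0 \<le> ?f t" by (rule AE_I2) (auto simp: indicator_def)
  have ge: "0 \<le> FF p s" unfolding FF_def set_lebesgue_integral_def by (rule integral_nonneg_AE[OF N])
  have ne: "FF p s \<noteq> 0"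
  proof
    assume "FF p s = 0"
    then have "AE t in lborel. ?f t = 0"
      using integral_nonneg_eq_0_iff_AE[OF I N] unfolding FF_def set_lebesgue_integral_def by simp
    then have "AE t in lborel. t \<notin> {0<..1::real}"
      by eventually_elim (auto simp: indicator_def)
    then have "emeasure lborel {0<..1::real} = 0"
      by (subst (asm) AE_iff_measurable[of "{0<..1}"]) auto
    then show False by simp
  qed
  show ?thesis using ge ne by simp
qed



lemma psi_eq:
  fixes \<mu> \<kappa> \<sigma> \<rho> x :: real
  assumes "\<kappa> > 0" "\<sigma> > 0"
  shows "psi_fun \<mu> \<kappa> \<sigma> \<rho> x = (1 / Gamma (\<rho>/\<kappa>)) * FF (\<rho>/\<kappa>) (sqrt (2*\<kappa>) / \<sigma> * (x - \<mu>))"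
proof -
  define z where "z = - ((x - \<mu>) / \<sigma>) * sqrt (2 * \<kappa>)"
  have z2: "z\<^sup>2 = 2 * \<kappa> * (x - \<mu>)\<^sup>2 / \<sigma>\<^sup>2"
    unfolding z_def using assms by (simp add: power_mult_distrib power_divide)
  have e: "exp (\<kappa> * (x - \<mu>)\<^sup>2 / (2 * \<sigma>\<^sup>2)) * exp (- (z\<^sup>2) / 4) = 1"
    unfolding z2 by (simp flip: exp_add)
  have I: "(LBINT t:{0<..}. t powr (- (- \<rho> / \<kappa>) - 1) * exp (- (t\<^sup>2) / 2 - z * t))
      = FF (\<rho>/\<kappa>) (sqrt (2*\<kappa>) / \<sigma> * (x - \<mu>))"
    unfolding FF_def z_def
    by (rule set_lebesgue_integral_cong) (auto simp: algebra_simps)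
  show ?thesis
    unfolding psi_fun_def parabolic_cylinder_D_def z_def[symmetric] I
    using e by (simp add: field_simps)
qed



lemma alg: "(d::real) \<noteq> 0 \<Longrightarrow> C * (F1 * a) * (y / d) + C * F0 / d = C / d * (F0 + (a * y) * F1)"
  by (simp add: field_simps)

theorem lemma4p2:
  fixes \<mu> \<kappa> \<sigma> \<rho> \<beta> c ybar :: real
  assumes "\<kappa> > 0" and "\<sigma> > 0" and "\<rho> > 0" and "\<beta> > 0" and "c \<ge> 0" and "ybar > 0"
  shows "\<exists>!x. H_fun \<mu> \<kappa> \<sigma> \<rho> \<beta> c ybar x = 0"
proof -
  define \<nu> where "\<nu> = \<rho> / \<kappa>"
  define a where "a = sqrt (2*\<kappa>) / \<sigma>"
  define C where "C = 1 / Gamma \<nu>"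
  have \<nu>: "\<nu> > 0" unfolding \<nu>_def using assms by simp
  have a: "a > 0" unfolding a_def using assms by simp
  have C: "C > 0" unfolding C_def using \<nu> by (simp add: Gamma_real_pos)
  have psi: "psi_fun \<mu> \<kappa> \<sigma> \<rho> = (\<lambda>x. C * FF \<nu> (a * (x - \<mu>)))"
    using psi_eq[OF assms(1,2)] unfolding C_def \<nu>_def a_def by auto
  have dpsi: "deriv (psi_fun \<mu> \<kappa> \<sigma> \<rho>) x = C * (FF (\<nu>+1) (a * (x - \<mu>)) * a)" for x
  proof -
    have "((\<lambda>x. C * FF \<nu> (a * (x - \<mu>))) has_real_derivative C * (FF (\<nu>+1) (a * (x - \<mu>)) * (a * (1 - 0)))) (at x)"
      by (intro DERIV_cmult DERIV_chain2[OF FF_deriv[OF \<nu>]] DERIV_cmult DERIV_diff DERIV_ident DERIV_const)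
    then show ?thesis unfolding psi by (simp add: DERIV_imp_deriv)
  qed
  define x0 where "x0 = (c * \<rho> * (\<rho> + \<kappa>) - \<mu> * \<kappa> + \<beta> * (\<rho> + 2*\<kappa>) * ybar) / \<rho>"
  define s0 where "s0 = a * (x0 - \<mu>)"
  define G where "G s = FF \<nu> s + (s0 - s) * FF (\<nu>+1) s" for s
  have cR: "c - R_tilde \<mu> \<kappa> \<rho> \<beta> x ybar = (x0 - x) / (\<rho> + \<kappa>)" for x
  proof -
    have n1: "\<rho> \<noteq> 0" "\<rho> + \<kappa> \<noteq> 0" "\<kappa> * \<rho> + \<rho> * \<rho> \<noteq> 0" "\<rho> * (\<rho> + \<kappa>) \<noteq> 0"
      using assms by (auto simp: add_pos_pos) (smt (verit) mult_pos_pos)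
    show ?thesis unfolding R_tilde_def x0_def using n1 by (simp add: field_simps)
  qed
  have H: "H_fun \<mu> \<kappa> \<sigma> \<rho> \<beta> c ybar x = C / (\<rho> + \<kappa>) * G (a * (x - \<mu>))" for x
  proof -
    have e1: "a * (x0 - x) = s0 - a * (x - \<mu>)" unfolding s0_def by (simp add: algebra_simps)
    have n: "\<rho> + \<kappa> \<noteq> 0" using assms by auto
    have "H_fun \<mu> \<kappa> \<sigma> \<rho> \<beta> c ybar x = C * (FF (\<nu>+1) (a * (x - \<mu>)) * a) * ((x0 - x) / (\<rho> + \<kappa>))
       + C * FF \<nu> (a * (x - \<mu>)) / (\<rho> + \<kappa>)"
      unfolding H_fun_def dpsi cR by (simp add: psi)
    also have "\<dots> = C / (\<rho> + \<kappa>) * (FF \<nu> (a * (x - \<mu>)) + (a * (x0 - x)) * FF (\<nu>+1) (a * (x - \<mu>)))"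
      using alg[OF n] .
    finally show ?thesis unfolding e1 G_def .
  qed
  have HG: "H_fun \<mu> \<kappa> \<sigma> \<rho> \<beta> c ybar x = 0 \<longleftrightarrow> G (a * (x - \<mu>)) = 0" for x
    unfolding H using C assms by simp
  have "\<exists>!s. G s = 0" unfolding G_def
    by (rule abstract_unique[of "FF \<nu>" "FF (\<nu>+1)" "FF (\<nu>+1+1)" "FF (\<nu>+1+1+1)" s0])
       (intro FF_deriv FF_pos; use \<nu> in simp)+
  then obtain s where s: "G s = 0" and su: "\<And>t. G t = 0 \<Longrightarrow> t = s" by blast
  show ?thesis
  proof (rule ex1I[of _ "\<mu> + s / a"])
    show "H_fun \<mu> \<kappa> \<sigma> \<rho> \<beta> c ybar (\<mu> + s / a) = 0" unfolding HG using s a by simp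
  next
    fix y assume "H_fun \<mu> \<kappa> \<sigma> \<rho> \<beta> c ybar y = 0"
    then have "a * (y - \<mu>) = s" using su HG by blast
    then show "y = \<mu> + s / a" using a by (simp add: field_simps)
  qed
qed

end
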